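(* In a game with incomplete information as described in the context, suppose Assumptions (I) and (P') hold. If two mixed strategy profiles $f$ and $g$ are universally distribution equivalent, then they are universally payoff equivalent, i.e. $U_i^E(f)=U_i^E(g)$ for every $i\in I$ and every $E\in\mathcal F_i$.
   Context: Game with incomplete information: players $I=\{1,\dots,n\}$. Each player $i$ has an action space $A_i$, a compact metric space; $A=\prod_{i\in I}A_i$ with Borel $\sigma$-algebra $\mathcal B(A)$. Each player $i$ has an information space $(T_i,\mathcal T_i,\lambda_i)$, an atomless probability space with $\lambda_i$ complete and countably additive; $T=\prod_i T_i$, $\mathcal T=\bigotimes_i\mathcal T_i$, and $\lambda$ is a probability measure on $(T,\mathcal T)$ whose marginal on $T_i$ is $\lambda_i$. For each $i$, $\mathcal F_i\subseteq\mathcal T_i$ is a sub-$\sigma$-algebra. Player $i$ has a payoff function $u_i:A\times T_i\to\mathbb R$. $\mathcal M(A_i)$ denotes the space of Borel probability measures on $A_i$ with the topology of weak convergence. A mixed strategy of $i$ is a $\mathcal T_i$-measurable map $f_i:T_i\to\mathcal M(A_i)$ (write $f_i(t_i,\cdot)$ for the measure); a pure strategy is a $\mathcal T_i$-measurable map $f_i:T_i\to A_i$, identified with $t_i\mapsto\delta_{f_i(t_i)}$. For a strategy profile $f=(f_1,\dots,f_n)$ and $E\in\mathcal T_i$, $U_i^E(f)=\int_{E\times\prod_{j\ne i}T_j}\int_A u_i(a_1,\dots,a_n,t_i)\prod_{j\in I}f_j(t_j,\mathrm d a_j)\,\mathrm d\lambda(t)$. Assumption (I): $\lambda=\bigotimes_{i\in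 I}\lambda_i$. Assumption (P'): for each $i$, $\mathcal F_i$ is countably generated; $u_i$ is $\mathcal B(A)\otimes\mathcal F_i$-measurable; $u_i(\cdot,t_i)$ is continuous on $A$ for every $t_i$; and there is a real-valued function $h_i$ integrable on $(T_i,\mathcal F_i,\lambda_i)$ with $|u_i|\le h_i$ on $A\times T_i$. Mixed strategy profiles $f,g$ are universally distribution equivalent if for every $i\in I$ and every $E\in\mathcal F_i$, $\int_E f_i(t_i,\cdot)\,\mathrm d\lambda_i(t_i)=\int_E g_i(t_i,\cdot)\,\mathrm d\lambda_i(t_i)$ as measures on $A_i$. *)

theory Defs
  imports "HOL-Probability.Probability"
begin

definition atomless :: "'a measure \<Rightarrow> bool" where
  "atomless M \<longleftrightarrow> (\<forall>S\<in>sets M. 0 < emeasure M S \<longrightarrow>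
      (\<exists>B\<in>sets M. B \<subseteq> S \<and> 0 < emeasure M B \<and> emeasure M B < emeasure M S))"

definition countably_generated :: "'a measure \<Rightarrow> bool" where
  "countably_generated M \<longleftrightarrow> (\<exists>C. countable C \<and> C \<subseteq> Pow (space M) \<and>
      sets M = sigma_sets (space M) C)"

definition act_space :: "'a::metric_space set \<Rightarrow> 'a measure" where
  "act_space S = restrict_space borel S"

definition payoff ::
  "('i::finite \<Rightarrow> 't) measure \<Rightarrow> ('i \<Rightarrow> ('i \<Rightarrow> 'a) \<Rightarrow> 't \<Rightarrow> real) \<Rightarrow>
   ('i \<Rightarrow> 't \<Rightarrow> 'a measure) \<Rightarrow> 'i \<Rightarrow> 't set \<Rightarrow> real" where
  "payoff lam u f i E =
     (LINT t : {t \<in> space lam. t i \<in> E} | lam.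
        (\<integral>a. u i a (t i) \<partial>(PiM UNIV (\<lambda>j. f j (t j)))))"

definition univ_dist_equiv ::
  "('i \<Rightarrow> 't measure) \<Rightarrow> ('i \<Rightarrow> 't measure) \<Rightarrow> ('i \<Rightarrow> 'a measure) \<Rightarrow>
   ('i \<Rightarrow> 't \<Rightarrow> 'a measure) \<Rightarrow> ('i \<Rightarrow> 't \<Rightarrow> 'a measure) \<Rightarrow> bool" where
  "univ_dist_equiv Tm Fm Am f g \<longleftrightarrow>
     (\<forall>i. \<forall>E\<in>sets (Fm i). \<forall>B\<in>sets (Am i).
        (\<integral>\<^sup>+ t. indicator E t * emeasure (f i t) B \<partial>Tm i) =
        (\<integral>\<^sup>+ t. indicator E t * emeasure (g i t) B \<partial>Tm i))"

end

theory Submission imports Defs begin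

lemma kernel_PiM_meas:
  fixes f :: "'i::finite \<Rightarrow> 't \<Rightarrow> 'a measure" and Tm :: "'i \<Rightarrow> 't measure"
  assumes f: "\<And>j. f j \<in> Tm j \<rightarrow>\<^sub>M prob_algebra (M j)"
  shows "(\<lambda>t. PiM UNIV (\<lambda>j. f j (t j))) \<in> PiM UNIV Tm \<rightarrow>\<^sub>M prob_algebra (PiM UNIV M)"
proof (rule measurable_prob_algebra_generated[OF sets_PiM Int_stable_prod_algebra prod_algebra_sets_into_space])
  fix t assume t: "t \<in> space (PiM UNIV Tm)"
  have fj: "f j (t j) \<in> space (prob_algebra (M j))" for j using measurable_space[OF f] t by (auto simp: space_PiM)
  then have s: "sets (f j (t j)) = sets (M j)" and p: "prob_space (f j (t j))" for j by (auto simp: space_prob_algebra)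
  show "prob_space (PiM UNIV (\<lambda>j. f j (t j)))" by (rule prob_space_PiM) (use p in auto)
  show "sets (PiM UNIV (\<lambda>j. f j (t j))) = sets (PiM UNIV M)" by (rule sets_PiM_cong) (use s in auto)
next
  fix X assume "X \<in> prod_algebra UNIV M"
  then obtain E where X: "X = PiE UNIV E" "E \<in> (\<Pi> i\<in>UNIV. sets (M i))" by (rule prod_algebraE_all)
  have mj: "(\<lambda>x. emeasure (f j x) (E j)) \<in> borel_measurable (Tm j)" for j
    using measurable_compose[OF measurable_prob_algebraD[OF f] measurable_emeasure_subprob_algebra] X by auto
  have m: "(\<lambda>t. \<Prod>j\<in>UNIV. emeasure (f j (t j)) (E j)) \<in> borel_measurable (PiM UNIV Tm)"
  proof (intro borel_measurable_prod_ennreal)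
    fix j :: 'i
    show "(\<lambda>t. emeasure (f j (t j)) (E j)) \<in> borel_measurable (PiM UNIV Tm)"
      using measurable_compose[OF measurable_component_singleton[of j UNIV Tm] mj[of j]] by simp
  qed
  show "(\<lambda>t. emeasure (PiM UNIV (\<lambda>j. f j (t j))) X) \<in> borel_measurable (PiM UNIV Tm)"
  proof (rule measurable_cong[THEN iffD1, OF _ m])
    fix t assume t: "t \<in> space (PiM UNIV Tm)"
    have fj: "f j (t j) \<in> space (prob_algebra (M j))" for j using measurable_space[OF f] t by (auto simp: space_PiM)
    then have s: "sets (f j (t j)) = sets (M j)" and p: "prob_space (f j (t j))" for j by (auto simp: space_prob_algebra)
    interpret product_prob_space "\<lambda>j. f j (t j)" by (rule product_prob_spaceI) (rule p)
    show "(\<Prod>j\<in>UNIV. emeasure (f j (t j)) (E j)) = emeasure (PiM UNIV (\<lambda>j. f j (t j))) X"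
      unfolding X using X s by (subst emeasure_PiM) auto
  qed
qed

lemma decomp:
  fixes M :: "'x measure" and N :: "'y measure" and K :: "'x \<Rightarrow> 'y measure" and \<psi> :: "'x \<Rightarrow> 'y \<Rightarrow> real"
  assumes K: "K \<in> M \<rightarrow>\<^sub>M prob_algebra N"
    and \<psi>m: "(\<lambda>(x,y). \<psi> x y) \<in> borel_measurable (M \<Otimes>\<^sub>M N)"
    and bd: "\<And>x y. x \<in> space M \<Longrightarrow> y \<in> space N \<Longrightarrow> \<bar>\<psi> x y\<bar> \<le> H x"
    and H: "integrable M H"
  shows "(\<integral>x. (\<integral>y. \<psi> x y \<partial>K x) \<partial>M)
     = enn2real (\<integral>\<^sup>+x. \<integral>\<^sup>+y. ennreal (\<psi> x y) \<partial>K x \<partial>M) - enn2real (\<integral>\<^sup>+x. \<integral>\<^sup>+y. ennreal (- \<psi> x y) \<partial>K x \<partial>M)"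
proof -
  have gen: "\<And>\<phi>. (\<lambda>(x,y). \<phi> x y) \<in> borel_measurable (M \<Otimes>\<^sub>M N) \<Longrightarrow>
       (\<And>x y. x \<in> space M \<Longrightarrow> y \<in> space N \<Longrightarrow> \<bar>\<phi> x y\<bar> \<le> H x) \<Longrightarrow>
       integrable M (\<lambda>x. enn2real (\<integral>\<^sup>+y. ennreal (\<phi> x y) \<partial>K x)) \<and>
       (\<integral>x. enn2real (\<integral>\<^sup>+y. ennreal (\<phi> x y) \<partial>K x) \<partial>M) = enn2real (\<integral>\<^sup>+x. \<integral>\<^sup>+y. ennreal (\<phi> x y) \<partial>K x \<partial>M)"
  proof -
    fix \<phi> :: "'x \<Rightarrow> 'y \<Rightarrow> real"
    assume \<phi>m: "(\<lambda>(x,y). \<phi> x y) \<in> borel_measurable (M \<Otimes>\<^sub>M N)"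
      and bd\<phi>: "\<And>x y. x \<in> space M \<Longrightarrow> y \<in> space N \<Longrightarrow> \<bar>\<phi> x y\<bar> \<le> H x"
    have m1: "(\<lambda>(x,y). ennreal (\<phi> x y)) \<in> borel_measurable (M \<Otimes>\<^sub>M N)" using \<phi>m by measurable
    have mI: "(\<lambda>x. \<integral>\<^sup>+y. ennreal (\<phi> x y) \<partial>K x) \<in> borel_measurable M"
      by (rule nn_integral_measurable_subprob_algebra2[OF m1 measurable_prob_algebraD[OF K]])
    have fin: "(\<integral>\<^sup>+y. ennreal (\<phi> x y) \<partial>K x) \<le> ennreal (H x)" and H0: "0 \<le> H x"
      if x: "x \<in> space M" for x
    proof -
      have Kx: "K x \<in> space (prob_algebra N)" using measurable_space[OF K x] .
      then have sK: "sets (K x) = sets N" and pK: "prob_space (K x)" by (auto simp: space_prob_algebra)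
      have spK: "space (K x) = space N" using sets_eq_imp_space_eq[OF sK] .
      obtain y where y: "y \<in> space N" using prob_space.not_empty[OF pK] spK by auto
      show "0 \<le> H x" using bd\<phi>[OF x y] by linarith
      have "(\<integral>\<^sup>+y. ennreal (\<phi> x y) \<partial>K x) \<le> (\<integral>\<^sup>+y. ennreal (H x) \<partial>K x)"
        using bd\<phi>[OF x] spK by (intro nn_integral_mono ennreal_leI) (auto simp: abs_le_iff)
      also have "\<dots> = ennreal (H x)" using prob_space.emeasure_space_1[OF pK] by simp
      finally show "(\<integral>\<^sup>+y. ennreal (\<phi> x y) \<partial>K x) \<le> ennreal (H x)" .
    qed
    have int: "integrable M (\<lambda>x. enn2real (\<integral>\<^sup>+y. ennreal (\<phi> x y) \<partial>K x))"
    proof (rule Bochner_Integration.integrable_bound[OF H])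
      show "(\<lambda>x. enn2real (\<integral>\<^sup>+y. ennreal (\<phi> x y) \<partial>K x)) \<in> borel_measurable M" using mI by measurable
      show "AE x in M. norm (enn2real (\<integral>\<^sup>+y. ennreal (\<phi> x y) \<partial>K x)) \<le> norm (H x)"
        using fin H0 by (intro AE_I2) (auto intro!: enn2real_leI)
    qed
    have "(\<integral>x. enn2real (\<integral>\<^sup>+y. ennreal (\<phi> x y) \<partial>K x) \<partial>M)
        = enn2real (\<integral>\<^sup>+x. ennreal (enn2real (\<integral>\<^sup>+y. ennreal (\<phi> x y) \<partial>K x)) \<partial>M)"
      using mI by (intro integral_eq_nn_integral) auto
    also have "(\<integral>\<^sup>+x. ennreal (enn2real (\<integral>\<^sup>+y. ennreal (\<phi> x y) \<partial>K x)) \<partial>M) = (\<integral>\<^sup>+x. \<integral>\<^sup>+y. ennreal (\<phi> x y) \<partial>K x \<partial>M)"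
    proof (rule nn_integral_cong)
      fix x assume x: "x \<in> space M"
      have "(\<integral>\<^sup>+y. ennreal (\<phi> x y) \<partial>K x) \<noteq> \<top>" using fin[OF x] by (auto simp: top_unique)
      then show "ennreal (enn2real (\<integral>\<^sup>+y. ennreal (\<phi> x y) \<partial>K x)) = (\<integral>\<^sup>+y. ennreal (\<phi> x y) \<partial>K x)"
        by (simp add: ennreal_enn2real_if)
    qed
    finally show "integrable M (\<lambda>x. enn2real (\<integral>\<^sup>+y. ennreal (\<phi> x y) \<partial>K x)) \<and>
       (\<integral>x. enn2real (\<integral>\<^sup>+y. ennreal (\<phi> x y) \<partial>K x) \<partial>M) = enn2real (\<integral>\<^sup>+x. \<integral>\<^sup>+y. ennreal (\<phi> x y) \<partial>K x \<partial>M)"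
      using int by simp
  qed
  have P: "integrable M (\<lambda>x. enn2real (\<integral>\<^sup>+y. ennreal (\<psi> x y) \<partial>K x)) \<and>
       (\<integral>x. enn2real (\<integral>\<^sup>+y. ennreal (\<psi> x y) \<partial>K x) \<partial>M) = enn2real (\<integral>\<^sup>+x. \<integral>\<^sup>+y. ennreal (\<psi> x y) \<partial>K x \<partial>M)"
    by (rule gen[OF \<psi>m bd])
  have Q: "integrable M (\<lambda>x. enn2real (\<integral>\<^sup>+y. ennreal (- \<psi> x y) \<partial>K x)) \<and>
       (\<integral>x. enn2real (\<integral>\<^sup>+y. ennreal (- \<psi> x y) \<partial>K x) \<partial>M) = enn2real (\<integral>\<^sup>+x. \<integral>\<^sup>+y. ennreal (- \<psi> x y) \<partial>K x \<partial>M)"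
  proof (rule gen)
    show "(\<lambda>(x,y). - \<psi> x y) \<in> borel_measurable (M \<Otimes>\<^sub>M N)" using \<psi>m by measurable
  qed (use bd in auto)
  have "(\<integral>x. (\<integral>y. \<psi> x y \<partial>K x) \<partial>M)
      = (\<integral>x. enn2real (\<integral>\<^sup>+y. ennreal (\<psi> x y) \<partial>K x) - enn2real (\<integral>\<^sup>+y. ennreal (- \<psi> x y) \<partial>K x) \<partial>M)"
  proof (rule Bochner_Integration.integral_cong[OF refl])
    fix x assume x: "x \<in> space M"
    have Kx: "K x \<in> space (prob_algebra N)" using measurable_space[OF K x] .
    then have sK: "sets (K x) = sets N" and pK: "prob_space (K x)" by (auto simp: space_prob_algebra)
    have spK: "space (K x) = space N" using sets_eq_imp_space_eq[OF sK] .
    interpret prob_space "K x" by (rule pK)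
    have mx: "\<psi> x \<in> borel_measurable (K x)"
      using measurable_Pair2[OF \<psi>m x] by (simp add: measurable_cong_sets[OF sK refl])
    have "integrable (K x) (\<psi> x)"
      using bd[OF x] spK by (intro integrable_const_bound[where B="H x"] mx AE_I2) auto
    then show "(\<integral>y. \<psi> x y \<partial>K x) = enn2real (\<integral>\<^sup>+y. ennreal (\<psi> x y) \<partial>K x) - enn2real (\<integral>\<^sup>+y. ennreal (- \<psi> x y) \<partial>K x)"
      by (rule real_lebesgue_integral_def)
  qed
  also have "\<dots> = (\<integral>x. enn2real (\<integral>\<^sup>+y. ennreal (\<psi> x y) \<partial>K x) \<partial>M) - (\<integral>x. enn2real (\<integral>\<^sup>+y. ennreal (- \<psi> x y) \<partial>K x) \<partial>M)"
    using P Q by (intro Bochner_Integration.integral_diff) auto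
  finally show ?thesis using P Q by simp
qed

context
  fixes Tm Fm :: "'i::finite \<Rightarrow> 't measure" and AM :: "'i \<Rightarrow> 'a measure"
  assumes T_prob: "\<And>i. prob_space (Tm i)" and F_sub: "\<And>i. subalgebra (Tm i) (Fm i)"
begin

lemma comp_F: "(\<lambda>t. t i) \<in> PiM UNIV Tm \<rightarrow>\<^sub>M Fm i"
proof -
  have m: "(\<lambda>t. t i) \<in> PiM UNIV Tm \<rightarrow>\<^sub>M Tm i" by simp
  show ?thesis using m F_sub[of i] unfolding measurable_def subalgebra_def by auto
qed

lemma kernJ_meas:
  assumes f: "\<And>j. f j \<in> Tm j \<rightarrow>\<^sub>M prob_algebra (AM j)"
  shows "(\<lambda>t. distr (PiM UNIV (\<lambda>j. f j (t j))) (PiM UNIV AM \<Otimes>\<^sub>M Fm i) (\<lambda>a. (a, t i)))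
     \<in> PiM UNIV Tm \<rightarrow>\<^sub>M prob_algebra (PiM UNIV AM \<Otimes>\<^sub>M Fm i)"
proof (rule measurable_distr_prob_space2[OF kernel_PiM_meas[OF f]])
  note comp_F[measurable]
  show "(\<lambda>(t, a). (a, t i)) \<in> PiM UNIV Tm \<Otimes>\<^sub>M PiM UNIV AM \<rightarrow>\<^sub>M PiM UNIV AM \<Otimes>\<^sub>M Fm i"
    by measurable
qed

lemma J_rect:
  assumes f: "\<And>j. f j \<in> Tm j \<rightarrow>\<^sub>M prob_algebra (AM j)" and B: "\<And>j. B j \<in> sets (AM j)"
    and F: "F \<in> sets (Fm i)"
  shows "emeasure (PiM UNIV Tm \<bind> (\<lambda>t. distr (PiM UNIV (\<lambda>j. f j (t j))) (PiM UNIV AM \<Otimes>\<^sub>M Fm i) (\<lambda>a. (a, t i)))) (PiE UNIV B \<times> F)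
    = (\<Prod>j\<in>UNIV. \<integral>\<^sup>+x. indicator (if j = i then F else space (Tm j)) x * emeasure (f j x) (B j) \<partial>Tm j)"
proof -
  interpret product_prob_space Tm by (rule product_prob_spaceI) (rule T_prob)
  have ne: "space (PiM UNIV Tm) \<noteq> {}"
    using prob_space.not_empty[OF prob_space_PiM[of UNIV Tm]] T_prob by auto
  have sB: "PiE UNIV B \<in> sets (PiM UNIV AM)" using B by (auto intro: sets_PiM_I_finite)
  have s: "PiE UNIV B \<times> F \<in> sets (PiM UNIV AM \<Otimes>\<^sub>M Fm i)" using sB F by auto
  have "emeasure (PiM UNIV Tm \<bind> (\<lambda>t. distr (PiM UNIV (\<lambda>j. f j (t j))) (PiM UNIV AM \<Otimes>\<^sub>M Fm i) (\<lambda>a. (a, t i)))) (PiE UNIV B \<times> F)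
     = \<integral>\<^sup>+t. emeasure (distr (PiM UNIV (\<lambda>j. f j (t j))) (PiM UNIV AM \<Otimes>\<^sub>M Fm i) (\<lambda>a. (a, t i))) (PiE UNIV B \<times> F) \<partial>PiM UNIV Tm"
    by (rule emeasure_bind[OF ne measurable_prob_algebraD[OF kernJ_meas[OF f]] s])
  also have "\<dots> = \<integral>\<^sup>+t. (\<Prod>j\<in>UNIV. indicator (if j = i then F else space (Tm j)) (t j) * emeasure (f j (t j)) (B j)) \<partial>PiM UNIV Tm"
  proof (rule nn_integral_cong)
    fix t assume t: "t \<in> space (PiM UNIV Tm)"
    have fj: "f j (t j) \<in> space (prob_algebra (AM j))" for j using measurable_space[OF f] t by (auto simp: space_PiM)
    then have sj: "sets (f j (t j)) = sets (AM j)" and p: "prob_space (f j (t j))" for j by (auto simp: space_prob_algebra)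
    interpret K: product_prob_space "\<lambda>j. f j (t j)" by (rule product_prob_spaceI) (rule p)
    have sK: "sets (PiM UNIV (\<lambda>j. f j (t j))) = sets (PiM UNIV AM)" by (rule sets_PiM_cong) (use sj in auto)
    have spK: "space (PiM UNIV (\<lambda>j. f j (t j))) = space (PiM UNIV AM)" using sets_eq_imp_space_eq[OF sK] .
    have ti: "t i \<in> space (Fm i)" using measurable_space[OF comp_F t] .
    have mp: "(\<lambda>a. (a, t i)) \<in> PiM UNIV (\<lambda>j. f j (t j)) \<rightarrow>\<^sub>M PiM UNIV AM \<Otimes>\<^sub>M Fm i"
      using ti by (simp add: measurable_cong_sets[OF sK refl])
    have BB: "PiE UNIV B \<subseteq> space (PiM UNIV AM)" using sets.sets_into_space[OF sB] .
    have "emeasure (distr (PiM UNIV (\<lambda>j. f j (t j))) (PiM UNIV AM \<Otimes>\<^sub>M Fm i) (\<lambda>a. (a, t i))) (PiE UNIV B \<times> F)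
        = emeasure (PiM UNIV (\<lambda>j. f j (t j))) ((\<lambda>a. (a, t i)) -` (PiE UNIV B \<times> F) \<inter> space (PiM UNIV (\<lambda>j. f j (t j))))"
      by (rule emeasure_distr[OF mp s])
    also have "\<dots> = indicator F (t i) * emeasure (PiM UNIV (\<lambda>j. f j (t j))) (PiE UNIV B)"
      using BB spK by (cases "t i \<in> F") (auto simp: Int_absorb2)
    also have "\<dots> = indicator F (t i) * (\<Prod>j\<in>UNIV. emeasure (f j (t j)) (B j))"
      using B sj by (subst K.emeasure_PiM) auto
    also have "\<dots> = (\<Prod>j\<in>UNIV. indicator (if j = i then F else space (Tm j)) (t j) * emeasure (f j (t j)) (B j))"
    proof -
      have tj: "t j \<in> space (Tm j)" for j using t by (auto simp: space_PiM)
      have "(\<Prod>j\<in>UNIV. indicator (if j = i then F else space (Tm j)) (t j) * emeasure (f j (t j)) (B j))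
          = (\<Prod>j\<in>UNIV. indicator (if j = i then F else space (Tm j)) (t j)) * (\<Prod>j\<in>UNIV. emeasure (f j (t j)) (B j))"
        by (rule prod.distrib)
      also have "(\<Prod>j\<in>UNIV. indicator (if j = i then F else space (Tm j)) (t j) :: ennreal) = indicator F (t i)"
        using prod.remove[of UNIV i "\<lambda>j. indicator (if j = i then F else space (Tm j)) (t j) :: ennreal"] tj
        by (auto simp: indicator_def)
      finally show ?thesis by simp
    qed
    finally show "emeasure (distr (PiM UNIV (\<lambda>j. f j (t j))) (PiM UNIV AM \<Otimes>\<^sub>M Fm i) (\<lambda>a. (a, t i))) (PiE UNIV B \<times> F)
       = (\<Prod>j\<in>UNIV. indicator (if j = i then F else space (Tm j)) (t j) * emeasure (f j (t j)) (B j))" .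
  qed
  also have "\<dots> = (\<Prod>j\<in>UNIV. \<integral>\<^sup>+x. indicator (if j = i then F else space (Tm j)) x * emeasure (f j x) (B j) \<partial>Tm j)"
  proof (rule product_nn_integral_prod)
    fix j :: 'i
    have Fj: "(if j = i then F else space (Tm j)) \<in> sets (Tm j)"
      using F F_sub[of i] by (auto simp: subalgebra_def)
    show "(\<lambda>x. indicator (if j = i then F else space (Tm j)) x * emeasure (f j x) (B j)) \<in> borel_measurable (Tm j)"
      using Fj measurable_compose[OF measurable_prob_algebraD[OF f] measurable_emeasure_subprob_algebra[OF B]]
      by (intro borel_measurable_times_ennreal) auto
  qed simp
  finally show ?thesis .
qed

lemma J_sets:
  assumes f: "\<And>j. f j \<in> Tm j \<rightarrow>\<^sub>M prob_algebra (AM j)"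
  shows "sets (PiM UNIV Tm \<bind> (\<lambda>t. distr (PiM UNIV (\<lambda>j. f j (t j))) (PiM UNIV AM \<Otimes>\<^sub>M Fm i) (\<lambda>a. (a, t i))))
     = sets (PiM UNIV AM \<Otimes>\<^sub>M Fm i)"
proof -
  have ne: "space (PiM UNIV Tm) \<noteq> {}"
    using prob_space.not_empty[OF prob_space_PiM[of UNIV Tm]] T_prob by auto
  show ?thesis by (rule sets_bind[OF _ ne]) simp
qed

lemma J_subprob:
  assumes f: "\<And>j. f j \<in> Tm j \<rightarrow>\<^sub>M prob_algebra (AM j)"
  shows "subprob_space (PiM UNIV Tm \<bind> (\<lambda>t. distr (PiM UNIV (\<lambda>j. f j (t j))) (PiM UNIV AM \<Otimes>\<^sub>M Fm i) (\<lambda>a. (a, t i))))"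
  by (rule subprob_space_bind[OF prob_space_imp_subprob_space[OF prob_space_PiM] measurable_prob_algebraD[OF kernJ_meas[OF f]]])
     (rule T_prob)

lemma J_eq:
  assumes f: "\<And>j. f j \<in> Tm j \<rightarrow>\<^sub>M prob_algebra (AM j)"
    and g: "\<And>j. g j \<in> Tm j \<rightarrow>\<^sub>M prob_algebra (AM j)"
    and eqv: "\<And>j E B. E \<in> sets (Fm j) \<Longrightarrow> B \<in> sets (AM j) \<Longrightarrow>
       (\<integral>\<^sup>+t. indicator E t * emeasure (f j t) B \<partial>Tm j) = (\<integral>\<^sup>+t. indicator E t * emeasure (g j t) B \<partial>Tm j)"
  shows "PiM UNIV Tm \<bind> (\<lambda>t. distr (PiM UNIV (\<lambda>j. f j (t j))) (PiM UNIV AM \<Otimes>\<^sub>M Fm i) (\<lambda>a. (a, t i)))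
       = PiM UNIV Tm \<bind> (\<lambda>t. distr (PiM UNIV (\<lambda>j. g j (t j))) (PiM UNIV AM \<Otimes>\<^sub>M Fm i) (\<lambda>a. (a, t i)))"
    (is "?Jf = ?Jg")
proof -
  let ?\<Omega> = "space (PiM UNIV AM) \<times> space (Fm i)"
  let ?G = "{X \<times> F | X F. X \<in> prod_algebra UNIV AM \<and> F \<in> sets (Fm i)}"
  have spPA: "space (PiM UNIV AM) = PiE UNIV (\<lambda>j. space (AM j))" by (simp add: space_PiM)
  have top: "PiE UNIV (\<lambda>j. space (AM j)) \<in> prod_algebra UNIV AM"
    by (rule prod_algebraI_finite) auto
  have Gsub: "?G \<subseteq> Pow ?\<Omega>"
    using prod_algebra_sets_into_space[of UNIV AM] sets.sets_into_space[of _ "Fm i"] spPA by fastforce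
  have sp: "sets (PiM UNIV AM \<Otimes>\<^sub>M Fm i) = sigma_sets ?\<Omega> ?G"
  proof -
    have "sets (PiM UNIV AM \<Otimes>\<^sub>M Fm i) = sets (sigma ?\<Omega> {a \<times> b | a b. a \<in> prod_algebra UNIV AM \<and> b \<in> sets (Fm i)})"
    proof (rule sets_pair_eq[where Ca="{space (PiM UNIV AM)}" and Cb="{space (Fm i)}"])
      show "prod_algebra UNIV AM \<subseteq> Pow (space (PiM UNIV AM))"
        using prod_algebra_sets_into_space[of UNIV AM] spPA by simp
      show "sets (PiM UNIV AM) = sigma_sets (space (PiM UNIV AM)) (prod_algebra UNIV AM)"
        using sets_PiM[of UNIV AM] spPA by simp
      show "{space (PiM UNIV AM)} \<subseteq> prod_algebra UNIV AM" using top spPA by simp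
      show "sets (Fm i) \<subseteq> Pow (space (Fm i))" using sets.space_closed .
      show "sets (Fm i) = sigma_sets (space (Fm i)) (sets (Fm i))" by (simp add: sets.sigma_sets_eq)
    qed auto
    also have "\<dots> = sigma_sets ?\<Omega> ?G" using Gsub by (simp add: sets_measure_of)
    finally show ?thesis .
  qed
  have Gint: "Int_stable ?G"
  proof (rule Int_stableI)
    fix a b assume "a \<in> ?G" "b \<in> ?G"
    then obtain X1 F1 X2 F2 where ab: "a = X1 \<times> F1" "b = X2 \<times> F2" "X1 \<in> prod_algebra UNIV AM" "X2 \<in> prod_algebra UNIV AM"
      "F1 \<in> sets (Fm i)" "F2 \<in> sets (Fm i)" by blast
    have "X1 \<inter> X2 \<in> prod_algebra UNIV AM" using Int_stable_prod_algebra ab unfolding Int_stable_def by blast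
    moreover have "F1 \<inter> F2 \<in> sets (Fm i)" using ab by auto
    ultimately show "a \<inter> b \<in> ?G" using ab by (auto simp: Times_Int_Times)
  qed
  show ?thesis
  proof (rule measure_eqI_generator_eq[OF Gint Gsub _ _ _, where A="\<lambda>_. ?\<Omega>"])
    fix X assume "X \<in> ?G"
    then obtain Y F where X: "X = Y \<times> F" "Y \<in> prod_algebra UNIV AM" "F \<in> sets (Fm i)" by blast
    obtain B where Y: "Y = PiE UNIV B" "B \<in> (\<Pi> j\<in>UNIV. sets (AM j))" using X(2) by (rule prod_algebraE_all)
    have B: "\<And>j. B j \<in> sets (AM j)" using Y by auto
    have Fj: "(if j = i then F else space (Tm j)) \<in> sets (Fm j)" for j
      using X(3) F_sub[of j] sets.top[of "Fm j"] by (auto simp: subalgebra_def)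
    show "emeasure ?Jf X = emeasure ?Jg X"
      unfolding X(1) Y(1) J_rect[OF f B X(3)] J_rect[OF g B X(3)]
      by (intro prod.cong refl eqv[OF Fj B])
  next
    show "sets ?Jf = sigma_sets ?\<Omega> ?G" using J_sets[OF f] sp by simp
    show "sets ?Jg = sigma_sets ?\<Omega> ?G" using J_sets[OF g] sp by simp
    show "range (\<lambda>_. ?\<Omega>) \<subseteq> ?G" using top spPA by auto
    show "(\<Union>_::nat. ?\<Omega>) = ?\<Omega>" by simp
    fix n :: nat
    interpret subprob_space ?Jf by (rule J_subprob[OF f])
    show "emeasure ?Jf ?\<Omega> \<noteq> \<infinity>" by simp
  qed
qed

lemma nn_J:
  assumes f: "\<And>j. f j \<in> Tm j \<rightarrow>\<^sub>M prob_algebra (AM j)"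
    and \<rho>: "\<rho> \<in> borel_measurable (PiM UNIV AM \<Otimes>\<^sub>M Fm i)"
  shows "(\<integral>\<^sup>+z. \<rho> z \<partial>(PiM UNIV Tm \<bind> (\<lambda>t. distr (PiM UNIV (\<lambda>j. f j (t j))) (PiM UNIV AM \<Otimes>\<^sub>M Fm i) (\<lambda>a. (a, t i)))))
     = (\<integral>\<^sup>+t. \<integral>\<^sup>+a. \<rho> (a, t i) \<partial>PiM UNIV (\<lambda>j. f j (t j)) \<partial>PiM UNIV Tm)"
proof -
  have "(\<integral>\<^sup>+z. \<rho> z \<partial>(PiM UNIV Tm \<bind> (\<lambda>t. distr (PiM UNIV (\<lambda>j. f j (t j))) (PiM UNIV AM \<Otimes>\<^sub>M Fm i) (\<lambda>a. (a, t i)))))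
     = (\<integral>\<^sup>+t. \<integral>\<^sup>+z. \<rho> z \<partial>distr (PiM UNIV (\<lambda>j. f j (t j))) (PiM UNIV AM \<Otimes>\<^sub>M Fm i) (\<lambda>a. (a, t i)) \<partial>PiM UNIV Tm)"
    by (rule nn_integral_bind[OF \<rho> measurable_prob_algebraD[OF kernJ_meas[OF f]]])
  also have "\<dots> = (\<integral>\<^sup>+t. \<integral>\<^sup>+a. \<rho> (a, t i) \<partial>PiM UNIV (\<lambda>j. f j (t j)) \<partial>PiM UNIV Tm)"
  proof (rule nn_integral_cong)
    fix t assume t: "t \<in> space (PiM UNIV Tm)"
    have fj: "f j (t j) \<in> space (prob_algebra (AM j))" for j using measurable_space[OF f] t by (auto simp: space_PiM)
    then have sj: "sets (f j (t j)) = sets (AM j)" for j by (auto simp: space_prob_algebra)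
    have sK: "sets (PiM UNIV (\<lambda>j. f j (t j))) = sets (PiM UNIV AM)" by (rule sets_PiM_cong) (use sj in auto)
    have ti: "t i \<in> space (Fm i)" using measurable_space[OF comp_F t] .
    have mp: "(\<lambda>a. (a, t i)) \<in> PiM UNIV (\<lambda>j. f j (t j)) \<rightarrow>\<^sub>M PiM UNIV AM \<Otimes>\<^sub>M Fm i"
      using ti by (simp add: measurable_cong_sets[OF sK refl])
    show "(\<integral>\<^sup>+z. \<rho> z \<partial>distr (PiM UNIV (\<lambda>j. f j (t j))) (PiM UNIV AM \<Otimes>\<^sub>M Fm i) (\<lambda>a. (a, t i)))
        = (\<integral>\<^sup>+a. \<rho> (a, t i) \<partial>PiM UNIV (\<lambda>j. f j (t j)))"
      by (rule nn_integral_distr[OF mp]) (simp add: \<rho>)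
  qed
  finally show ?thesis .
qed

end

theorem proposition1:
  fixes A :: "'i::finite \<Rightarrow> 'a::metric_space set"
    and Tm Fm :: "'i \<Rightarrow> 't measure"
    and lam :: "('i \<Rightarrow> 't) measure"
    and u :: "'i \<Rightarrow> ('i \<Rightarrow> 'a) \<Rightarrow> 't \<Rightarrow> real"
    and h :: "'i \<Rightarrow> 't \<Rightarrow> real"
    and f g :: "'i \<Rightarrow> 't \<Rightarrow> 'a measure"
  assumes A_compact: "\<And>i. compact (A i)"
    and T_prob: "\<And>i. prob_space (Tm i)"
    and T_atomless: "\<And>i. atomless (Tm i)"
    and T_complete: "\<And>i. complete_measure (Tm i)"
    and lam_prob: "prob_space lam"
    and lam_sets: "sets lam = sets (PiM UNIV Tm)"
    and lam_marg: "\<And>i. distr lam (Tm i) (\<lambda>t. t i) = Tm i"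
    and F_sub: "\<And>i. subalgebra (Tm i) (Fm i)"
    \<comment> \<open>Assumption (I)\<close>
    and indep: "lam = PiM UNIV Tm"
    \<comment> \<open>Assumption (P')\<close>
    and F_cg: "\<And>i. countably_generated (Fm i)"
    and u_meas: "\<And>i. (\<lambda>(a, t). u i a t) \<in>
                    borel_measurable (PiM UNIV (\<lambda>j. act_space (A j)) \<Otimes>\<^sub>M Fm i)"
    and u_cont: "\<And>i t. t \<in> space (Tm i) \<Longrightarrow> continuous_on (Pi UNIV A) (\<lambda>a. u i a t)"
    and h_meas: "\<And>i. h i \<in> borel_measurable (Fm i)"
    and h_int: "\<And>i. integrable (Tm i) (h i)"
    and u_bound: "\<And>i a t. a \<in> Pi UNIV A \<Longrightarrow> t \<in> space (Tm i) \<Longrightarrow> \<bar>u i a t\<bar> \<le> h i t"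
    \<comment> \<open>mixed strategies\<close>
    and f_strat: "\<And>i. f i \<in> Tm i \<rightarrow>\<^sub>M prob_algebra (act_space (A i))"
    and g_strat: "\<And>i. g i \<in> Tm i \<rightarrow>\<^sub>M prob_algebra (act_space (A i))"
    and equiv: "univ_dist_equiv Tm Fm (\<lambda>i. act_space (A i)) f g"
  shows "\<forall>i. \<forall>E\<in>sets (Fm i). payoff lam u f i E = payoff lam u g i E"
proof (intro allI ballI)
  fix i E assume E: "E \<in> sets (Fm i)"
  let ?AM = "\<lambda>j. act_space (A j)"
  let ?PA = "PiM UNIV ?AM"
  have spPA: "space ?PA = Pi UNIV A"
    by (simp add: space_PiM act_space_def space_restrict_space PiE_UNIV_domain)
  have compF: "(\<lambda>t. t i) \<in> PiM UNIV Tm \<rightarrow>\<^sub>M Fm i" by (rule comp_F[OF T_prob F_sub])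
  have Em: "E \<in> sets (Fm i)" by (rule E)
  have um: "(\<lambda>z. u i (fst z) (snd z)) \<in> borel_measurable (?PA \<Otimes>\<^sub>M Fm i)"
    using u_meas[of i] by (simp add: case_prod_beta')
  have \<rho>m: "(\<lambda>z. indicator E (snd z) * u i (fst z) (snd z)) \<in> borel_measurable (?PA \<Otimes>\<^sub>M Fm i)"
    using um Em by measurable
  have \<rho>p: "(\<lambda>z. ennreal (indicator E (snd z) * u i (fst z) (snd z))) \<in> borel_measurable (?PA \<Otimes>\<^sub>M Fm i)"
    using \<rho>m by measurable
  have \<rho>n: "(\<lambda>z. ennreal (- (indicator E (snd z) * u i (fst z) (snd z)))) \<in> borel_measurable (?PA \<Otimes>\<^sub>M Fm i)"
    using \<rho>m by measurable
  have swap: "(\<lambda>(t, a). (a, t i)) \<in> PiM UNIV Tm \<Otimes>\<^sub>M ?PA \<rightarrow>\<^sub>M ?PA \<Otimes>\<^sub>M Fm i"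
    using compF by measurable
  have \<psi>m: "(\<lambda>(t, a). indicator E (t i) * u i a (t i)) \<in> borel_measurable (PiM UNIV Tm \<Otimes>\<^sub>M ?PA)"
    using measurable_compose[OF swap \<rho>m] by (simp add: case_prod_beta')
  have hm: "h i \<in> borel_measurable (Tm i)" using h_int[of i] by auto
  have Hint: "integrable (PiM UNIV Tm) (\<lambda>t. h i (t i))"
  proof -
    have "integrable (distr lam (Tm i) (\<lambda>t. t i)) (h i)" using lam_marg h_int by simp
    then show ?thesis unfolding indep by (subst (asm) integrable_distr_eq) (use hm in auto)
  qed
  have key: "payoff lam u k i E =
      enn2real (\<integral>\<^sup>+z. ennreal (indicator E (snd z) * u i (fst z) (snd z)) \<partial>(PiM UNIV Tm \<bind> (\<lambda>t. distr (PiM UNIV (\<lambda>j. k j (t j))) (?PA \<Otimes>\<^sub>M Fm i) (\<lambda>a. (a, t i)))))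
    - enn2real (\<integral>\<^sup>+z. ennreal (- (indicator E (snd z) * u i (fst z) (snd z))) \<partial>(PiM UNIV Tm \<bind> (\<lambda>t. distr (PiM UNIV (\<lambda>j. k j (t j))) (?PA \<Otimes>\<^sub>M Fm i) (\<lambda>a. (a, t i)))))"
    if k: "\<And>j. k j \<in> Tm j \<rightarrow>\<^sub>M prob_algebra (?AM j)" for k
  proof -
    have Km: "(\<lambda>t. PiM UNIV (\<lambda>j. k j (t j))) \<in> PiM UNIV Tm \<rightarrow>\<^sub>M prob_algebra ?PA"
      by (rule kernel_PiM_meas[OF k])
    have "payoff lam u k i E = (\<integral>t. (\<integral>a. indicator E (t i) * u i a (t i) \<partial>PiM UNIV (\<lambda>j. k j (t j))) \<partial>PiM UNIV Tm)"
      unfolding payoff_def set_lebesgue_integral_def indep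
    proof (rule Bochner_Integration.integral_cong[OF refl])
      fix t assume t: "t \<in> space (PiM UNIV Tm)"
      then have "indicator {t \<in> space (PiM UNIV Tm). t i \<in> E} t = (indicator E (t i) :: real)"
        by (auto simp: indicator_def)
      then show "indicator {t \<in> space (PiM UNIV Tm). t i \<in> E} t *\<^sub>R (\<integral>a. u i a (t i) \<partial>PiM UNIV (\<lambda>j. k j (t j)))
          = (\<integral>a. indicator E (t i) * u i a (t i) \<partial>PiM UNIV (\<lambda>j. k j (t j)))"
        by simp
    qed
    also have "\<dots> = enn2real (\<integral>\<^sup>+t. \<integral>\<^sup>+a. ennreal (indicator E (t i) * u i a (t i)) \<partial>PiM UNIV (\<lambda>j. k j (t j)) \<partial>PiM UNIV Tm)
       - enn2real (\<integral>\<^sup>+t. \<integral>\<^sup>+a. ennreal (- (indicator E (t i) * u i a (t i))) \<partial>PiM UNIV (\<lambda>j. k j (t j)) \<partial>PiM UNIV Tm)"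
    proof (rule decomp[OF Km \<psi>m _ Hint])
      fix t a assume t: "t \<in> space (PiM UNIV Tm)" and a: "a \<in> space ?PA"
      have ti: "t i \<in> space (Tm i)" using t by (auto simp: space_PiM)
      have "\<bar>u i a (t i)\<bar> \<le> h i (t i)" using u_bound[OF _ ti] a spPA by auto
      then show "\<bar>indicator E (t i) * u i a (t i)\<bar> \<le> h i (t i)"
        by (auto simp: indicator_def)
    qed
    also have "\<dots> = enn2real (\<integral>\<^sup>+z. ennreal (indicator E (snd z) * u i (fst z) (snd z)) \<partial>(PiM UNIV Tm \<bind> (\<lambda>t. distr (PiM UNIV (\<lambda>j. k j (t j))) (?PA \<Otimes>\<^sub>M Fm i) (\<lambda>a. (a, t i)))))
    - enn2real (\<integral>\<^sup>+z. ennreal (- (indicator E (snd z) * u i (fst z) (snd z))) \<partial>(PiM UNIV Tm \<bind> (\<lambda>t. distr (PiM UNIV (\<lambda>j. k j (t j))) (?PA \<Otimes>\<^sub>M Fm i) (\<lambda>a. (a, t i)))))"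
      by (simp add: nn_J[OF T_prob F_sub k \<rho>p] nn_J[OF T_prob F_sub k \<rho>n])
    finally show ?thesis .
  qed
  have eqv: "(\<integral>\<^sup>+t. indicator E' t * emeasure (f j t) B \<partial>Tm j) = (\<integral>\<^sup>+t. indicator E' t * emeasure (g j t) B \<partial>Tm j)"
    if "E' \<in> sets (Fm j)" "B \<in> sets (?AM j)" for j E' B
    using equiv that unfolding univ_dist_equiv_def by blast
  show "payoff lam u f i E = payoff lam u g i E"
  proof -
    have Jeq: "PiM UNIV Tm \<bind> (\<lambda>t. distr (PiM UNIV (\<lambda>j. f j (t j))) (?PA \<Otimes>\<^sub>M Fm i) (\<lambda>a. (a, t i)))
       = PiM UNIV Tm \<bind> (\<lambda>t. distr (PiM UNIV (\<lambda>j. g j (t j))) (?PA \<Otimes>\<^sub>M Fm i) (\<lambda>a. (a, t i)))"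
      by (rule J_eq[OF T_prob F_sub f_strat g_strat eqv])
    show ?thesis by (simp only: key[OF f_strat] key[OF g_strat] Jeq)
  qed
qed

end
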